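(* Let $\xi$ be a one-dimensional white noise on $U=]0,+\infty[$ and let $\phi\in\mathcal{D}$, $\phi\not\equiv0$. Then the random vector $\big(\langle\xi,\phi\rangle,\langle\dot\xi,\phi\rangle,\langle\ddot\xi,\phi\rangle,\langle\dddot\xi,\phi\rangle\big)$ has a law that is absolutely continuous with respect to Lebesgue measure on $\mathbb{R}^4$.
   Context: $\mathcal{D}=C_c^\infty(]0,+\infty[)$. A one-dimensional white noise $\xi$ is a random distribution such that the variables $\langle\xi,\phi\rangle$, $\phi\in\mathcal{D}$, are jointly centred Gaussian with $E[\langle\xi,\phi\rangle\langle\xi,\psi\rangle]=\int_0^\infty\phi\psi$. Derivatives of random distributions are defined by $\langle\xi^{(k)},\phi\rangle=(-1)^k\langle\xi,\phi^{(k)}\rangle$. *)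

theory Defs
  imports "HOL-Probability.Probability"
begin

definition smooth_fun :: "(real \<Rightarrow> real) \<Rightarrow> bool" where
  "smooth_fun f \<longleftrightarrow> (\<forall>n x. ((deriv ^^ n) f) differentiable (at x))"

definition test_fun :: "(real \<Rightarrow> real) \<Rightarrow> bool" where
  "test_fun f \<longleftrightarrow> smooth_fun f \<and>
     (\<exists>a b. 0 < a \<and> a \<le> b \<and> (\<forall>x. x \<notin> {a..b} \<longrightarrow> f x = 0))"

definition centred_gaussian :: "'a measure \<Rightarrow> ('a \<Rightarrow> real) \<Rightarrow> real \<Rightarrow> bool" where
  "centred_gaussian M X v \<longleftrightarrow> X \<in> borel_measurable M \<and> 0 \<le> v \<and>
     (if v = 0 then (AE \<omega> in M. X \<omega> = 0)
      else distributed M lborel X (normal_density 0 (sqrt v)))"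

definition white_noise :: "'a measure \<Rightarrow> ((real \<Rightarrow> real) \<Rightarrow> 'a \<Rightarrow> real) \<Rightarrow> bool" where
  "white_noise M W \<longleftrightarrow> prob_space M \<and>
     (\<forall>phi. test_fun phi \<longrightarrow> W phi \<in> borel_measurable M) \<and>
     (\<forall>(n::nat) (phis :: nat \<Rightarrow> real \<Rightarrow> real) (c :: nat \<Rightarrow> real).
        (\<forall>i<n. test_fun (phis i)) \<longrightarrow>
        centred_gaussian M (\<lambda>\<omega>. \<Sum>i<n. c i * W (phis i) \<omega>)
          (\<Sum>i<n. \<Sum>j<n. c i * c j *
             (LINT x:{0<..}|lborel. phis i x * phis j x)))"

text \<open>Pairing of the k-th distributional derivative: <xi^(k), phi> = (-1)^k <xi, phi^(k)>.\<close>
definition deriv_pair :: "((real \<Rightarrow> real) \<Rightarrow> 'a \<Rightarrow> real) \<Rightarrow> nat \<Rightarrow> (real \<Rightarrow> real) \<Rightarrow> 'a \<Rightarrow> real" where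
  "deriv_pair W k phi = (\<lambda>\<omega>. (-1) ^ k * W ((deriv ^^ k) phi) \<omega>)"

end

theory Submission
  imports Defs
begin


definition trig :: "('a::real_inner \<Rightarrow> real) \<Rightarrow> bool" where
  "trig f \<longleftrightarrow> (\<exists>l::('a \<times> complex) list. \<forall>x.
      complex_of_real (f x) = (\<Sum>p\<leftarrow>l. snd p * iexp (fst p \<bullet> x)))"

lemma trig_const: "trig (\<lambda>x. c)"
  unfolding trig_def by (rule exI[of _ "[(0, complex_of_real c)]"]) simp

lemma trig_add: "trig f \<Longrightarrow> trig g \<Longrightarrow> trig (\<lambda>x. f x + g x)"
  unfolding trig_def
proof (elim exE)
  fix l1 l2 assume 1: "\<forall>x. complex_of_real (f x) = (\<Sum>p\<leftarrow>l1. snd p * iexp (fst p \<bullet> x))"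
    and 2: "\<forall>x. complex_of_real (g x) = (\<Sum>p\<leftarrow>l2. snd p * iexp (fst p \<bullet> x))"
  show "\<exists>l. \<forall>x. complex_of_real (f x + g x) = (\<Sum>p\<leftarrow>l. snd p * iexp (fst p \<bullet> x))"
    by (rule exI[of _ "l1 @ l2"]) (simp add: 1 2)
qed

lemma sum_list_prod_expand:
  fixes a :: "'x \<Rightarrow> complex" and b :: "'y \<Rightarrow> complex"
  shows "(\<Sum>p\<leftarrow>l1. a p) * (\<Sum>q\<leftarrow>l2. b q) = (\<Sum>r\<leftarrow>concat (map (\<lambda>p. map (\<lambda>q. (p,q)) l2) l1). a (fst r) * b (snd r))"
proof (induction l1)
  case Nil then show ?case by simp
next
  case (Cons p l1)
  have "(\<Sum>q\<leftarrow>l2. a p * b q) = a p * (\<Sum>q\<leftarrow>l2. b q)"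
    by (induction l2) (simp_all add: algebra_simps)
  then show ?case using Cons by (simp add: algebra_simps comp_def)
qed

lemma trig_mult: "trig f \<Longrightarrow> trig g \<Longrightarrow> trig (\<lambda>x. f x * g x)"
  unfolding trig_def
proof (elim exE)
  fix l1 l2 assume 1: "\<forall>x. complex_of_real (f x) = (\<Sum>p\<leftarrow>l1. snd p * iexp (fst p \<bullet> x))"
    and 2: "\<forall>x. complex_of_real (g x) = (\<Sum>p\<leftarrow>l2. snd p * iexp (fst p \<bullet> x))"
  let ?l = "map (\<lambda>r. (fst (fst r) + fst (snd r), snd (fst r) * snd (snd r)))
             (concat (map (\<lambda>p. map (\<lambda>q. (p,q)) l2) l1))"
  show "\<exists>l. \<forall>x. complex_of_real (f x * g x) = (\<Sum>p\<leftarrow>l. snd p * iexp (fst p \<bullet> x))"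
  proof (rule exI[of _ ?l], intro allI)
    fix x
    have "complex_of_real (f x * g x) = (\<Sum>p\<leftarrow>l1. snd p * iexp (fst p \<bullet> x)) * (\<Sum>p\<leftarrow>l2. snd p * iexp (fst p \<bullet> x))"
      using 1 2 by simp
    also have "\<dots> = (\<Sum>r\<leftarrow>concat (map (\<lambda>p. map (\<lambda>q. (p,q)) l2) l1).
         (snd (fst r) * iexp (fst (fst r) \<bullet> x)) * (snd (snd r) * iexp (fst (snd r) \<bullet> x)))"
      by (rule sum_list_prod_expand)
    also have "\<dots> = (\<Sum>p\<leftarrow>?l. snd p * iexp (fst p \<bullet> x))"
      by (simp add: comp_def inner_add_left distrib_left exp_add algebra_simps)
    finally show "complex_of_real (f x * g x) = (\<Sum>p\<leftarrow>?l. snd p * iexp (fst p \<bullet> x))" .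
  qed
qed

lemma trig_prod: "finite S \<Longrightarrow> (\<And>b. b \<in> S \<Longrightarrow> trig (f b)) \<Longrightarrow> trig (\<lambda>x. \<Prod>b\<in>S. f b x)"
proof (induction S rule: finite_induct)
  case empty then show ?case by (simp add: trig_const)
next
  case (insert b S)
  then show ?case by (simp add: trig_mult)
qed

lemma cos_iexp: "complex_of_real (cos y) = (1/2) * iexp y + (1/2) * iexp (- y)"
proof -
  have "complex_of_real (cos y) = cos (complex_of_real y)" by (simp add: cos_of_real)
  also have "\<dots> = (exp(\<i> * y) + exp(-(\<i> * y))) / 2" by (rule cos_exp_eq)
  finally show ?thesis by (simp add: field_simps)
qed

lemma sin_iexp: "complex_of_real (sin y) = (1/(2*\<i>)) * iexp y + (- 1/(2*\<i>)) * iexp (- y)"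
proof -
  have "complex_of_real (sin y) = sin (complex_of_real y)" by (simp add: sin_of_real)
  also have "\<dots> = (exp(\<i> * y) - exp(-(\<i> * y))) / (2*\<i>)" by (rule sin_exp_eq)
  finally show ?thesis by (simp add: field_simps)
qed

lemma trig_cos: "trig (\<lambda>x. cos (t \<bullet> x))"
  unfolding trig_def
  by (rule exI[of _ "[(t, 1/2), (-t, 1/2)]"]) (simp add: cos_iexp inner_minus_left)
lemma trig_sin: "trig (\<lambda>x. sin (t \<bullet> x))"
  unfolding trig_def
  by (rule exI[of _ "[(t, 1/(2*\<i>)), (-t, - 1/(2*\<i>))]"]) (simp add: sin_iexp inner_minus_left)

lemma trig_compose: "trig (p :: real \<Rightarrow> real) \<Longrightarrow> trig (\<lambda>x. p (x \<bullet> b))"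
  unfolding trig_def
proof (elim exE)
  fix l assume 1: "\<forall>x. complex_of_real (p x) = (\<Sum>q\<leftarrow>l. snd q * iexp (fst q \<bullet> x))"
  show "\<exists>l. \<forall>x. complex_of_real (p (x \<bullet> b)) = (\<Sum>q\<leftarrow>l. snd q * iexp (fst q \<bullet> x))"
    by (rule exI[of _ "map (\<lambda>q. (fst q *\<^sub>R b, snd q)) l"]) (simp add: 1 comp_def inner_commute)
qed


lemma integrable_iexp_fin:
  assumes "finite_measure M" "sets M = sets borel"
  shows "integrable M (\<lambda>x. iexp (t \<bullet> x))"
proof -
  interpret finite_measure M by fact
  have m: "(\<lambda>x. iexp (t \<bullet> x)) \<in> borel_measurable M"
    unfolding measurable_cong_sets[OF assms(2) refl]
    by (intro borel_measurable_continuous_onI continuous_intros)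
  show ?thesis
    by (rule integrable_const_bound[where B=1]) (auto simp: m norm_exp_i_times)
qed

lemma integral_trig_list:
  assumes "finite_measure M" "sets M = sets borel"
  shows "integrable M (\<lambda>x. (\<Sum>p\<leftarrow>l. snd p * iexp (fst p \<bullet> x))) \<and>
     (\<integral>x. (\<Sum>p\<leftarrow>l. snd p * iexp (fst p \<bullet> x)) \<partial>M) = (\<Sum>p\<leftarrow>l. snd p * (\<integral>x. iexp (fst p \<bullet> x) \<partial>M))"
proof (induction l)
  case Nil then show ?case by simp
next
  case (Cons p l)
  have i: "integrable M (\<lambda>x. snd p * iexp (fst p \<bullet> x))"
    using integrable_iexp_fin[OF assms] by (intro integrable_mult_right) 
  show ?case using Cons i by (simp add: integral_add)
qed

lemma trig_integral_eq:
  assumes "finite_measure M" "sets M = sets borel" "finite_measure N" "sets N = sets borel"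
    and ch: "\<And>t. (\<integral>x. iexp (t \<bullet> x) \<partial>M) = (\<integral>x. iexp (t \<bullet> x) \<partial>N)"
    and "trig f"
  shows "(\<integral>x. f x \<partial>M) = (\<integral>x. f x \<partial>N)"
proof -
  obtain l where l: "\<And>x. complex_of_real (f x) = (\<Sum>p\<leftarrow>l. snd p * iexp (fst p \<bullet> x))"
    using \<open>trig f\<close> unfolding trig_def by blast
  have "complex_of_real (\<integral>x. f x \<partial>M) = (\<integral>x. complex_of_real (f x) \<partial>M)" by simp
  also have "\<dots> = (\<Sum>p\<leftarrow>l. snd p * (\<integral>x. iexp (fst p \<bullet> x) \<partial>M))"
    unfolding l using integral_trig_list[OF assms(1,2)] by blast
  also have "\<dots> = (\<Sum>p\<leftarrow>l. snd p * (\<integral>x. iexp (fst p \<bullet> x) \<partial>N))"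
    by (simp only: ch)
  also have "\<dots> = (\<integral>x. complex_of_real (f x) \<partial>N)"
    unfolding l using integral_trig_list[OF assms(3,4)] by metis
  also have "\<dots> = complex_of_real (\<integral>x. f x \<partial>N)" by simp
  finally show ?thesis by simp
qed

lemma bounded_linear_complex_real:
  fixes g :: "complex \<Rightarrow> real"
  assumes "bounded_linear g"
  shows "g z = Re z * g 1 + Im z * g \<i>"
proof -
  interpret bounded_linear g by fact
  have "z = Re z *\<^sub>R 1 + Im z *\<^sub>R \<i>" by (simp add: complex_eq_iff)
  then have "g z = g (Re z *\<^sub>R 1 + Im z *\<^sub>R \<i>)" by simp
  also have "\<dots> = Re z * g 1 + Im z * g \<i>" by (simp add: add scale)
  finally show ?thesis .
qed

lemma trig_poly_cis:
  fixes g :: "complex \<Rightarrow> real"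
  assumes "real_polynomial_function g"
  shows "trig (\<lambda>x::real. g (cis (a * x)))"
  using assms
proof (induction rule: real_polynomial_function.induct)
  case (linear f)
  have eq: "(\<lambda>x::real. f (cis (a * x))) = (\<lambda>x. cos (a \<bullet> x) * f 1 + sin (a \<bullet> x) * f \<i>)"
  proof
    fix x :: real
    show "f (cis (a * x)) = cos (a \<bullet> x) * f 1 + sin (a \<bullet> x) * f \<i>"
      using bounded_linear_complex_real[OF linear, of "cis (a * x)"] by (simp add: inner_real_def)
  qed
  show ?case unfolding eq
    by (intro trig_add trig_mult trig_cos trig_sin trig_const)
next
  case (const c) then show ?case by (rule trig_const)
next
  case (add f g) then show ?case using trig_add by blast
next
  case (mult f g) then show ?case using trig_mult by blast
qed


lemma Arg_far:
  fixes w :: complex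
  assumes "norm w = 1" "Re w < cos c" "0 \<le> c" "c \<le> pi"
  shows "c \<le> \<bar>Arg w\<bar>"
proof (rule ccontr)
  assume "\<not> c \<le> \<bar>Arg w\<bar>"
  then have lt: "\<bar>Arg w\<bar> < c" by simp
  have w0: "w \<noteq> 0" using assms(1) by auto
  have "sgn w = cis (Arg w)" using Arg_correct[OF w0] by simp
  then have "w = cis (Arg w)" using assms(1) by (simp add: sgn_div_norm)
  then have "Re w = cos (Arg w)" by (metis cis.sel(1))
  also have "\<dots> = cos \<bar>Arg w\<bar>" by (simp add: abs_if)
  also have "\<dots> > cos c" using cos_monotone_0_pi[of "\<bar>Arg w\<bar>" c] lt assms by simp
  finally show False using assms(2) by simp
qed

lemma t1: assumes "0 < L" "L < R" shows "0 < pi * L / R" "pi * L / R < pi"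
proof -
  have R: "0 < R" using assms by simp
  show "0 < pi * L / R" using assms R by simp
  have "pi * L < pi * R" using assms by simp
  then show "pi * L / R < pi" using R by (simp add: divide_less_eq)
qed

lemma t2: assumes "0 < R" "pi * L / R \<le> \<bar>a\<bar>" shows "L \<le> \<bar>R / pi * a\<bar>"
proof -
  have "pi * L \<le> R * \<bar>a\<bar>" using assms by (simp add: divide_le_eq mult.commute)
  then have "L \<le> R * \<bar>a\<bar> / pi" by (simp add: le_divide_eq mult.commute)
  then show ?thesis using assms(1) by (simp add: abs_mult)
qed

lemma t3: assumes "(z::complex) \<in> \<real>\<^sub>\<le>\<^sub>0" "norm z = 1" shows "z = -1"
proof -
  obtain r where r: "z = complex_of_real r" "r \<le> 0" using assms(1) by (auto simp: nonpos_Reals_def)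
  then have "\<bar>r\<bar> = 1" using assms(2) by simp
  then show ?thesis using r by simp
qed


lemma contF_lemma:
  fixes h :: "real \<Rightarrow> real"
  assumes cont: "continuous_on UNIV h"
    and supp: "\<And>x. L \<le> \<bar>x\<bar> \<Longrightarrow> h x = 0" and L: "0 < L" "L < R"
  shows "continuous_on (sphere 0 1) (\<lambda>z. h (R / pi * Arg z))"
proof -
  define F where "F z = h (R / pi * Arg z)" for z
  define S where "S = sphere (0::complex) 1"
  define c where "c = pi * L / R"
  have R0: "0 < R" using L by simp
  have c0: "0 < c" "c < pi" unfolding c_def using t1[OF L] by auto
  have Fzero: "F w = 0" if "w \<in> S" "Re w < cos c" for w
  proof -
    have "c \<le> \<bar>Arg w\<bar>" using Arg_far[of w c] that c0 unfolding S_def by simp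
    then have "L \<le> \<bar>R / pi * Arg w\<bar>" unfolding c_def using t2[OF R0] by blast
    then show ?thesis unfolding F_def by (rule supp)
  qed
  have cm1: "-1 < cos c" using cos_monotone_0_pi[of c pi] c0 by simp
  have contF: "continuous_on S F"
    unfolding continuous_on_eq_continuous_within
  proof
    fix z assume zS: "z \<in> S"
    show "continuous (at z within S) F"
    proof (cases "z \<in> \<real>\<^sub>\<le>\<^sub>0")
      case False
      have ca: "continuous (at z) (\<lambda>w. R / pi * Arg w)"
        using continuous_at_Arg[OF False] by (intro continuous_intros)
      have ch: "continuous (at (R / pi * Arg z)) h"
        using cont by (simp add: continuous_on_eq_continuous_at)
      have "continuous (at z) (h \<circ> (\<lambda>w. R / pi * Arg w))"
        by (rule continuous_at_compose[OF ca ch])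
      then have "continuous (at z) F" unfolding F_def comp_def .
      then show ?thesis by (rule continuous_at_imp_continuous_within)
    next
      case True
      have zm: "z = -1" using t3[OF True] zS unfolding S_def by simp
      have Fz: "F z = 0" using Fzero[OF zS] zm cm1 by simp
      have ev: "eventually (\<lambda>w. F w = 0) (at z within S)"
        unfolding eventually_at_topological
      proof (rule exI[of _ "{w. Re w < cos c}"], intro conjI ballI impI)
        show "open {w. Re w < cos c}" by (intro open_Collect_less continuous_intros)
        show "z \<in> {w. Re w < cos c}" using zm cm1 by simp
        show "F w = 0" if "w \<in> {w. Re w < cos c}" "w \<noteq> z" "w \<in> S" for w
          using Fzero that by simp
      qed
      show ?thesis unfolding continuous_within Fz
        by (rule tendsto_eventually[OF ev])
    qed
  qed
  then show ?thesis unfolding F_def[abs_def] S_def .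
qed


lemma trig_approx1:
  fixes h :: "real \<Rightarrow> real"
  assumes cont: "continuous_on UNIV h" and rng: "\<And>x. 0 \<le> h x \<and> h x \<le> 1"
    and supp: "\<And>x. L \<le> \<bar>x\<bar> \<Longrightarrow> h x = 0" and L: "0 < L" "L < R" and e: "0 < e"
  shows "\<exists>p. trig p \<and> (\<forall>x. \<bar>p x\<bar> \<le> 1) \<and> (\<forall>x. \<bar>x\<bar> \<le> R \<longrightarrow> \<bar>p x - h x\<bar> \<le> e)"
proof -
  define F where "F z = h (R / pi * Arg z)" for z
  define S where "S = sphere (0::complex) 1"
  have R0: "0 < R" using L by simp
  have contF: "continuous_on S F" unfolding F_def[abs_def] S_def
    by (rule contF_lemma[OF cont supp L]) 
  define d where "d = e / 2"
  have d: "0 < d" unfolding d_def using e by simp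
  have cS: "compact S" unfolding S_def by simp
  obtain g where g: "real_polynomial_function g" and gF: "\<And>z. z \<in> S \<Longrightarrow> \<bar>F z - g z\<bar> < d"
    using Stone_Weierstrass_real_polynomial_function[OF cS contF d] by blast
  define p where "p x = g (cis (pi / R * x)) * (1 / (1 + d))" for x
  have trp: "trig p" unfolding p_def[abs_def]
    by (intro trig_mult trig_poly_cis[OF g] trig_const)
  have cisS: "cis y \<in> S" for y unfolding S_def by simp
  have Fb: "\<bar>F z\<bar> \<le> 1" for z unfolding F_def using rng[of "R / pi * Arg z"] by simp
  have pb: "\<bar>p x\<bar> \<le> 1" for x
  proof -
    have "\<bar>g (cis (pi / R * x))\<bar> \<le> 1 + d"
      using gF[OF cisS, of "pi / R * x"] Fb[of "cis (pi / R * x)"] by linarith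
    then show ?thesis unfolding p_def using d by (simp add: abs_mult divide_le_eq)
  qed
  have Fcis: "F (cis (pi / R * x)) = h x" if "\<bar>x\<bar> \<le> R" for x
  proof (cases "x = - R")
    case True
    have "pi / R * x = - pi" using True R0 by simp
    then have "cis (pi / R * x) = -1" by (simp add: complex_eq_iff)
    moreover have "Arg (-1) = pi" using Arg_of_real[of "-1"] by simp
    ultimately have "F (cis (pi / R * x)) = h R" unfolding F_def using R0 by simp
    also have "\<dots> = 0" using supp L by simp
    also have "\<dots> = h x" using supp L True by simp
    finally show ?thesis .
  next
    case False
    then have "- R < x" using that by (simp add: abs_le_iff)
    then have "(- R) * pi < x * pi" by (intro mult_strict_right_mono) auto
    then have a: "- pi < pi / R * x" using R0 by (simp add: field_simps)
    have "x \<le> R" using that by (simp add: abs_le_iff)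
    then have b: "pi / R * x \<le> pi" using R0 pi_gt_zero
      by (simp add: divide_le_eq)
    have "Arg (cis (pi / R * x)) = pi / R * x" using a b by (intro Arg_cis) simp
    then show ?thesis unfolding F_def using R0 pi_gt_zero by simp
  qed
  have approx: "\<bar>p x - h x\<bar> \<le> e" if "\<bar>x\<bar> \<le> R" for x
  proof -
    define G where "G = g (cis (pi / R * x))"
    define H where "H = h x"
    have 1: "\<bar>H - G\<bar> < d" using gF[OF cisS, of "pi / R * x"] Fcis[OF that] unfolding G_def H_def by simp
    have 2: "0 \<le> H" "H \<le> 1" using rng unfolding H_def by auto
    have eq: "p x - h x = (G - H) / (1 + d) - H * d / (1 + d)"
      unfolding p_def G_def[symmetric] H_def[symmetric] using d by (simp add: divide_simps) (simp add: algebra_simps)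
    have 3: "\<bar>G - H\<bar> / (1 + d) \<le> d" using 1 d by (simp add: divide_le_eq abs_minus_commute) (smt (verit) mult_le_cancel_left1)
    have 4: "\<bar>H * d / (1 + d)\<bar> \<le> d" using 2 d by (simp add: divide_le_eq abs_mult)
    have "\<bar>p x - h x\<bar> \<le> \<bar>G - H\<bar> / (1 + d) + \<bar>H * d / (1 + d)\<bar>" unfolding eq
      using abs_triangle_ineq4[of "(G - H) / (1 + d)" "H * d / (1 + d)"] d by (simp add: abs_divide)
    then have "\<bar>p x - h x\<bar> \<le> d + d" using 3 4 by linarith
    then show ?thesis unfolding d_def by simp
  qed
  show ?thesis using trp pb approx by blast
qed


lemma trig_continuous: "trig f \<Longrightarrow> continuous_on UNIV f"
proof -
  assume "trig f"
  then obtain l where l: "\<And>x. complex_of_real (f x) = (\<Sum>p\<leftarrow>l. snd p * iexp (fst p \<bullet> x))"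
    unfolding trig_def by blast
  have "f = (\<lambda>x. Re (\<Sum>p\<leftarrow>l. snd p * iexp (fst p \<bullet> x)))"
    by (rule ext) (metis Re_complex_of_real l)
  moreover have "continuous_on UNIV (\<lambda>x. (\<Sum>p\<leftarrow>l. snd p * iexp (fst p \<bullet> x)))"
    by (induction l) (auto intro!: continuous_intros)
  ultimately show ?thesis by (auto intro!: continuous_intros)
qed

lemma approx_int:
  fixes M :: "'a::euclidean_space measure"
  assumes fin: "finite_measure M" and sM: "sets M = sets borel"
    and cf: "continuous_on UNIV f" and cP: "continuous_on UNIV P"
    and bf: "\<And>x. \<bar>f x\<bar> \<le> 1" and bP: "\<And>x. \<bar>P x\<bar> \<le> 1"
    and K: "closed K" and apx: "\<And>x. x \<in> K \<Longrightarrow> \<bar>f x - P x\<bar> \<le> \<delta>" and d: "0 \<le> \<delta>"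
  shows "\<bar>(\<integral>x. f x \<partial>M) - (\<integral>x. P x \<partial>M)\<bar> \<le> \<delta> * measure M UNIV + 2 * measure M (- K)"
proof -
  interpret finite_measure M by fact
  have sp: "space M = UNIV" using sets_eq_imp_space_eq[OF sM] by simp
  have mf: "f \<in> borel_measurable M" unfolding measurable_cong_sets[OF sM refl]
    by (rule borel_measurable_continuous_onI[OF cf])
  have mP: "P \<in> borel_measurable M" unfolding measurable_cong_sets[OF sM refl]
    by (rule borel_measurable_continuous_onI[OF cP])
  have iF: "integrable M f" by (rule integrable_const_bound[where B=1]) (use bf mf in auto)
  have iP: "integrable M P" by (rule integrable_const_bound[where B=1]) (use bP mP in auto)
  have Ks: "- K \<in> sets M" unfolding sM using K by (simp add: borel_closed borel_comp)
  have iI: "integrable M (indicator (- K) :: 'a \<Rightarrow> real)"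
    using Ks by (simp add: emeasure_eq_measure)
  have ib: "integrable M (\<lambda>x. \<delta> + 2 * indicator (- K) x)"
    by (rule Bochner_Integration.integrable_add[OF integrable_const integrable_mult_right[OF iI]])
  have pw: "\<bar>f x - P x\<bar> \<le> \<delta> + 2 * indicator (- K) x" for x
  proof (cases "x \<in> K")
    case True then show ?thesis using apx[OF True] by simp
  next
    case False then show ?thesis using bf[of x] bP[of x] d by simp
  qed
  have "(\<integral>x. f x \<partial>M) - (\<integral>x. P x \<partial>M) = (\<integral>x. f x - P x \<partial>M)"
    using iF iP by simp
  also have "\<bar>\<dots>\<bar> \<le> (\<integral>x. \<delta> + 2 * indicator (- K) x \<partial>M)"
    by (rule integral_abs_bound_integral) (use iF iP ib pw in auto)
  also have "\<dots> = \<delta> * measure M UNIV + 2 * measure M (- K)"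
    using iI Ks sp by (simp add: integral_add)
  finally show ?thesis .
qed

lemma eps_eq:
  fixes A B C :: real
  assumes "C \<ge> 0" "\<And>e. 0 < e \<Longrightarrow> \<bar>A - B\<bar> \<le> e * C"
  shows "A = B"
proof (rule ccontr)
  assume "A \<noteq> B"
  then have pos: "0 < \<bar>A - B\<bar>" by simp
  define e where "e = \<bar>A - B\<bar> / (2 * (C + 1))"
  have e: "0 < e" unfolding e_def using pos assms(1) by simp
  have "\<bar>A - B\<bar> \<le> e * C" using assms(2)[OF e] .
  also have "\<dots> < e * (C + 1)" using e by simp
  also have "\<dots> = \<bar>A - B\<bar> / 2" unfolding e_def using assms(1) by (auto simp: field_simps)
  finally show False using pos by simp
qed

definition tailset :: "real \<Rightarrow> 'a::euclidean_space set" where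
  "tailset R = {x. \<exists>b\<in>Basis. R < \<bar>x \<bullet> b\<bar>}"

lemma tailset_compl: "- tailset R = {x. \<forall>b\<in>Basis. \<bar>x \<bullet> b\<bar> \<le> R}"
  unfolding tailset_def by (auto simp: not_less)

lemma closed_tailset_compl: "closed (- tailset R :: 'a::euclidean_space set)"
  unfolding tailset_compl Collect_ball_eq
  by (intro closed_INT ballI closed_Collect_le continuous_intros)

lemma tailset_small:
  fixes M :: "'a::euclidean_space measure"
  assumes "finite_measure M" "sets M = sets borel" "0 < e"
  shows "\<exists>N. \<forall>n\<ge>N. measure M (tailset (real n)) \<le> e"
proof -
  interpret finite_measure M by fact
  have sets: "range (\<lambda>n. tailset (real n)) \<subseteq> sets M"
  proof -
    have "tailset (real n) \<in> sets (borel :: 'a measure)" for n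
    proof -
      have "- (- tailset (real n)) \<in> sets (borel :: 'a measure)"
        using closed_tailset_compl[of "real n", where 'a='a] by (intro borel_comp borel_closed)
      then show ?thesis by simp
    qed
    then show ?thesis using assms(2) by auto
  qed
  have dec: "decseq (\<lambda>n. tailset (real n) :: 'a set)"
    unfolding decseq_def tailset_def by auto (meson le_less_trans of_nat_mono)
  have int: "(\<Inter>n. tailset (real n) :: 'a set) = {}"
  proof -
    have "x \<notin> tailset (real n)" if "n \<ge> nat \<lceil>norm x\<rceil>" for x :: 'a and n
    proof -
      have "\<bar>x \<bullet> b\<bar> \<le> real n" if "b \<in> Basis" for b
      proof -
        have "\<bar>x \<bullet> b\<bar> \<le> norm x" using Basis_le_norm[OF that] by simp
        also have "\<dots> \<le> real n" using \<open>n \<ge> nat \<lceil>norm x\<rceil>\<close> by linarith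
        finally show ?thesis .
      qed
      then show ?thesis unfolding tailset_def by (auto simp: not_less)
    qed
    then show ?thesis by blast
  qed
  have "(\<lambda>n. measure M (tailset (real n))) \<longlonglongrightarrow> 0"
    using finite_Lim_measure_decseq[OF sets dec] int by simp
  then have "eventually (\<lambda>n. measure M (tailset (real n)) < e) sequentially"
    using assms(3) by (simp add: order_tendsto_iff)
  then show ?thesis unfolding eventually_sequentially by (meson less_imp_le)
qed


lemma prod_integral_eq:
  fixes M N :: "'a::euclidean_space measure" and h :: "'a \<Rightarrow> real \<Rightarrow> real" and L :: real
  assumes fM: "finite_measure M" and sM: "sets M = sets borel"
    and fN: "finite_measure N" and sN: "sets N = sets borel"
    and ch: "\<And>t. (\<integral>x. iexp (t \<bullet> x) \<partial>M) = (\<integral>x. iexp (t \<bullet> x) \<partial>N)"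
    and hc: "\<And>b. b \<in> Basis \<Longrightarrow> continuous_on UNIV (h b)"
    and hr: "\<And>b x. b \<in> Basis \<Longrightarrow> 0 \<le> h b x \<and> h b x \<le> 1"
    and hs: "\<And>b x. b \<in> Basis \<Longrightarrow> L \<le> \<bar>x\<bar> \<Longrightarrow> h b x = 0" and L: "0 < L"
  shows "(\<integral>x. (\<Prod>b\<in>Basis. h b (x \<bullet> b)) \<partial>M) = (\<integral>x. (\<Prod>b\<in>Basis. h b (x \<bullet> b)) \<partial>N)"
proof -
  define f where "f x = (\<Prod>b\<in>Basis. h b (x \<bullet> b))" for x :: 'a
  define C where "C = real DIM('a) * (measure M UNIV + measure N UNIV) + 4"
  have C0: "0 \<le> C" unfolding C_def by simp
  have cf1: "continuous_on UNIV (\<lambda>x::'a. h b (x \<bullet> b))" if b: "b \<in> Basis" for b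
    by (rule continuous_on_compose2[OF hc[OF b]]) (auto intro: continuous_intros)
  have cf: "continuous_on UNIV f" unfolding f_def[abs_def]
    by (auto intro!: continuous_on_prod cf1)
  have bf: "\<bar>f x\<bar> \<le> 1" for x
    unfolding f_def abs_prod using hr by (intro prod_le_1) auto
  have "(\<integral>x. f x \<partial>M) = (\<integral>x. f x \<partial>N)"
  proof (rule eps_eq[OF C0])
    fix e :: real assume e: "0 < e"
    obtain n1 where n1: "\<And>n. n \<ge> n1 \<Longrightarrow> measure M (tailset (real n)) \<le> e"
      using tailset_small[OF fM sM e] by blast
    obtain n2 where n2: "\<And>n. n \<ge> n2 \<Longrightarrow> measure N (tailset (real n)) \<le> e"
      using tailset_small[OF fN sN e] by blast
    define n where "n = max (max n1 n2) (nat \<lceil>L\<rceil> + 1)"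
    define R where "R = real n"
    have LR: "L < R" unfolding R_def n_def by linarith
    have tM: "measure M (tailset R) \<le> e" unfolding R_def by (rule n1) (simp add: n_def)
    have tN: "measure N (tailset R) \<le> e" unfolding R_def by (rule n2) (simp add: n_def)
    have "\<forall>b\<in>Basis. \<exists>p. trig p \<and> (\<forall>x. \<bar>p x\<bar> \<le> 1) \<and> (\<forall>x. \<bar>x\<bar> \<le> R \<longrightarrow> \<bar>p x - h b x\<bar> \<le> e)"
    proof
      fix b :: 'a assume b: "b \<in> Basis"
      show "\<exists>p. trig p \<and> (\<forall>x. \<bar>p x\<bar> \<le> 1) \<and> (\<forall>x. \<bar>x\<bar> \<le> R \<longrightarrow> \<bar>p x - h b x\<bar> \<le> e)"
        by (rule trig_approx1[OF hc[OF b] hr[OF b] hs[OF b] L LR e])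
    qed
    then obtain p where p: "\<And>b. b \<in> Basis \<Longrightarrow> trig (p b) \<and> (\<forall>x. \<bar>p b x\<bar> \<le> 1) \<and>
        (\<forall>x. \<bar>x\<bar> \<le> R \<longrightarrow> \<bar>p b x - h b x\<bar> \<le> e)"
      by metis
    define P where "P x = (\<Prod>b\<in>Basis. p b (x \<bullet> b))" for x :: 'a
    have trP: "trig P" unfolding P_def[abs_def]
      by (intro trig_prod trig_compose) (auto simp: p)
    have cP: "continuous_on UNIV P" by (rule trig_continuous[OF trP])
    have bP: "\<bar>P x\<bar> \<le> 1" for x
      unfolding P_def abs_prod using p by (intro prod_le_1) auto
    have PMN: "(\<integral>x. P x \<partial>M) = (\<integral>x. P x \<partial>N)"
      by (rule trig_integral_eq[OF fM sM fN sN ch trP])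
    define \<delta> where "\<delta> = real DIM('a) * e"
    have d0: "0 \<le> \<delta>" unfolding \<delta>_def using e by simp
    have apx: "\<bar>f x - P x\<bar> \<le> \<delta>" if "x \<in> - tailset R" for x
    proof -
      have xb: "\<bar>x \<bullet> b\<bar> \<le> R" if "b \<in> Basis" for b
        using \<open>x \<in> - tailset R\<close> that unfolding tailset_compl by blast
      have "\<bar>f x - P x\<bar> \<le> (\<Sum>b\<in>Basis. norm (h b (x \<bullet> b) - p b (x \<bullet> b)))"
        unfolding f_def P_def real_norm_def[symmetric]
        by (rule norm_prod_diff) (use hr p in auto)
      also have "\<dots> \<le> real DIM('a) * e"
        using sum_bounded_above[of Basis "\<lambda>b. norm (h b (x \<bullet> b) - p b (x \<bullet> b))" e] p xb
        by (simp add: abs_minus_commute)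
      finally show ?thesis unfolding \<delta>_def .
    qed
    have K: "closed (- tailset R :: 'a set)" by (rule closed_tailset_compl)
    have 1: "\<bar>(\<integral>x. f x \<partial>M) - (\<integral>x. P x \<partial>M)\<bar> \<le> \<delta> * measure M UNIV + 2 * measure M (tailset R)"
      using approx_int[OF fM sM cf cP bf bP K apx d0] by simp
    have 2: "\<bar>(\<integral>x. f x \<partial>N) - (\<integral>x. P x \<partial>N)\<bar> \<le> \<delta> * measure N UNIV + 2 * measure N (tailset R)"
      using approx_int[OF fN sN cf cP bf bP K apx d0] by simp
    have "\<bar>(\<integral>x. f x \<partial>M) - (\<integral>x. f x \<partial>N)\<bar> \<le> \<delta> * measure M UNIV + 2 * measure M (tailset R)
        + (\<delta> * measure N UNIV + 2 * measure N (tailset R))"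
      using 1 2 PMN by linarith
    also have "\<dots> \<le> \<delta> * measure M UNIV + 2 * e + (\<delta> * measure N UNIV + 2 * e)"
      using tM tN by simp
    also have "\<dots> = e * C" unfolding C_def \<delta>_def by (simp add: algebra_simps)
    finally show "\<bar>(\<integral>x. f x \<partial>M) - (\<integral>x. f x \<partial>N)\<bar> \<le> e * C" .
  qed
  then show ?thesis unfolding f_def .
qed


definition ramp :: "nat \<Rightarrow> real \<Rightarrow> real \<Rightarrow> real \<Rightarrow> real" where
  "ramp k lo hi y = min 1 (real k * max 0 (min (y - lo) (hi - y)))"

lemma ramp_cont: "continuous_on UNIV (ramp k lo hi)"
  unfolding ramp_def[abs_def] by (intro continuous_intros)

lemma ramp_range: "0 \<le> ramp k lo hi y \<and> ramp k lo hi y \<le> 1"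
  unfolding ramp_def by auto

lemma ramp_zero: "y \<le> lo \<or> hi \<le> y \<Longrightarrow> ramp k lo hi y = 0"
  unfolding ramp_def by auto

lemma ramp_lim: "(\<lambda>k. ramp k lo hi y) \<longlonglongrightarrow> indicator {lo<..<hi} y"
proof (cases "lo < y \<and> y < hi")
  case True
  define m where "m = min (y - lo) (hi - y)"
  have m: "0 < m" unfolding m_def using True by simp
  obtain K :: nat where K: "1 / m < real K" using reals_Archimedean2 by blast
  have "ramp k lo hi y = 1" if "k \<ge> K" for k
  proof -
    have "1 / m < real k" using K that by (meson less_le_trans of_nat_mono)
    then have "1 \<le> real k * m" using m by (simp add: divide_less_eq mult.commute)
    then show ?thesis unfolding ramp_def m_def[symmetric] using m by simp
  qed
  then have "eventually (\<lambda>k. ramp k lo hi y = 1) sequentially"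
    unfolding eventually_sequentially by blast
  then have "(\<lambda>k. ramp k lo hi y) \<longlonglongrightarrow> 1" by (rule tendsto_eventually)
  then show ?thesis using True by simp
next
  case False
  then have "ramp k lo hi y = 0" for k by (intro ramp_zero) auto
  then show ?thesis using False by simp
qed

lemma indicator_box_prod:
  fixes a u x :: "'a::euclidean_space"
  shows "(indicator (box a u) x :: real) = (\<Prod>b\<in>Basis. indicator {a \<bullet> b<..<u \<bullet> b} (x \<bullet> b))"
proof (cases "x \<in> box a u")
  case True then show ?thesis by (simp add: mem_box)
next
  case False
  then obtain b where b: "b \<in> Basis" "\<not> (a \<bullet> b < x \<bullet> b \<and> x \<bullet> b < u \<bullet> b)" by (auto simp: mem_box)
  then have "(\<Prod>b\<in>Basis. indicator {a \<bullet> b<..<u \<bullet> b} (x \<bullet> b) :: real) = 0"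
    by (intro prod_zero[OF finite_Basis] bexI[of _ b]) auto
  then show ?thesis using False by simp
qed

lemma box_measure_eq:
  fixes M N :: "'a::euclidean_space measure"
  assumes fM: "finite_measure M" and sM: "sets M = sets borel"
    and fN: "finite_measure N" and sN: "sets N = sets borel"
    and ch: "\<And>t. (\<integral>x. iexp (t \<bullet> x) \<partial>M) = (\<integral>x. iexp (t \<bullet> x) \<partial>N)"
  shows "measure M (box a u) = measure N (box a u)"
proof -
  define s where "s k x = (\<Prod>b\<in>Basis. ramp k (a \<bullet> b) (u \<bullet> b) (x \<bullet> b))" for k x
  define L where "L = 1 + norm a + norm u"
  have L0: "0 < L" unfolding L_def by (simp add: add_pos_nonneg)
  have rz: "ramp k (a \<bullet> b) (u \<bullet> b) y = 0" if "b \<in> Basis" "L \<le> \<bar>y\<bar>" for k b y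
  proof (rule ramp_zero)
    have "\<bar>a \<bullet> b\<bar> \<le> norm a" "\<bar>u \<bullet> b\<bar> \<le> norm u" using Basis_le_norm that(1) by auto
    then show "y \<le> a \<bullet> b \<or> u \<bullet> b \<le> y" using that(2) unfolding L_def by (auto simp: abs_le_iff)
  qed
  have eqk: "(\<integral>x. s k x \<partial>M) = (\<integral>x. s k x \<partial>N)" for k
    unfolding s_def
    by (rule prod_integral_eq[OF fM sM fN sN ch ramp_cont ramp_range rz L0])
  have cs: "continuous_on UNIV (s k)" for k unfolding s_def[abs_def]
    by (intro continuous_on_prod continuous_on_compose2[OF ramp_cont] continuous_intros) auto
  have lim: "(\<lambda>k. s k x) \<longlonglongrightarrow> indicator (box a u) x" for x
    unfolding s_def indicator_box_prod by (intro tendsto_prod ramp_lim)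
  have bd: "norm (s k x) \<le> 1" for k x
    unfolding s_def real_norm_def abs_prod using ramp_range by (intro prod_le_1) auto
  have conv: "(\<lambda>k. \<integral>x. s k x \<partial>K) \<longlonglongrightarrow> measure K (box a u)"
    if fK: "finite_measure K" and sK: "sets K = sets borel" for K :: "'a measure"
  proof -
    interpret finite_measure K by fact
    have bs: "box a u \<in> sets K" using sK by simp
    have "(\<lambda>k. \<integral>x. s k x \<partial>K) \<longlonglongrightarrow> (\<integral>x. indicator (box a u) x \<partial>K)"
    proof (rule integral_dominated_convergence[where w="\<lambda>_. 1"])
      show "(indicator (box a u) :: 'a \<Rightarrow> real) \<in> borel_measurable K" using bs by simp
      show "s k \<in> borel_measurable K" for k unfolding measurable_cong_sets[OF sK refl]
        by (rule borel_measurable_continuous_onI[OF cs])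
      show "integrable K (\<lambda>_. 1::real)" by simp
      show "AE x in K. (\<lambda>k. s k x) \<longlonglongrightarrow> indicator (box a u) x" using lim by simp
      show "AE x in K. norm (s k x) \<le> 1" for k using bd by simp
    qed
    then show ?thesis using bs by (simp add: emeasure_eq_measure)
  qed
  show ?thesis using LIMSEQ_unique[OF conv[OF fM sM] conv[OF fN sN, folded eqk]] by simp
qed

lemma measure_eq_char:
  fixes M N :: "'a::euclidean_space measure"
  assumes fM: "finite_measure M" and sM: "sets M = sets borel"
    and fN: "finite_measure N" and sN: "sets N = sets borel"
    and ch: "\<And>t. (\<integral>x. iexp (t \<bullet> x) \<partial>M) = (\<integral>x. iexp (t \<bullet> x) \<partial>N)"
  shows "M = N"
proof (rule measure_eqI_generator_eq)
  let ?E = "range (\<lambda>(a, b). box a b::'a set)"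
  show "Int_stable ?E"
    by (auto simp: Int_stable_def box_Int_box)
  show "?E \<subseteq> Pow UNIV" "sets M = sigma_sets UNIV ?E" "sets N = sigma_sets UNIV ?E"
    by (simp_all add: borel_eq_box sM sN)
  let ?A = "\<lambda>n::nat. box (- (real n *\<^sub>R One)) (real n *\<^sub>R One) :: 'a set"
  show "range ?A \<subseteq> ?E" "(\<Union>i. ?A i) = UNIV"
    unfolding UN_box_eq_UNIV by auto
  show "emeasure M (?A i) \<noteq> \<infinity>" for i
    using finite_measure.emeasure_finite[OF fM] by simp
  show "emeasure M X = emeasure N X" if "X \<in> ?E" for X
  proof -
    obtain a u where X: "X = box a u" using \<open>X \<in> ?E\<close> by auto
    have "measure M X = measure N X" unfolding X by (rule box_measure_eq[OF fM sM fN sN ch])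
    moreover have "X \<in> sets M" "X \<in> sets N" using X sM sN by auto
    ultimately show ?thesis
      using finite_measure.emeasure_eq_measure[OF fM] finite_measure.emeasure_eq_measure[OF fN] by simp
  qed
qed


lemma std_normal_char: "(\<integral>x. complex_of_real (std_normal_density x) * iexp (s * x) \<partial>lborel) = exp (- (s^2) / 2)"
proof -
  have "(\<integral>x. complex_of_real (std_normal_density x) * iexp (s * x) \<partial>lborel)
      = (\<integral>x. std_normal_density x *\<^sub>R iexp (s * x) \<partial>lborel)"
    by (simp add: scaleR_conv_of_real)
  also have "\<dots> = char std_normal_distribution s"
    unfolding char_def by (subst integral_density) auto
  also have "\<dots> = exp (- (s^2) / 2)" by (simp add: char_std_normal_distribution)
  finally show ?thesis .
qed

lemma std_normal_char_integrable: "integrable lborel (\<lambda>x. complex_of_real (std_normal_density x) * iexp (s * x))"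
proof -
  interpret real_distribution std_normal_distribution by (rule real_dist_normal_dist)
  have "integrable std_normal_distribution (\<lambda>x. iexp (s * x))"
    by (rule integrable_const_bound[where B=1]) auto
  then have "integrable lborel (\<lambda>x. std_normal_density x *\<^sub>R iexp (s * x))"
    by (subst (asm) integrable_density) auto
  then show ?thesis by (simp add: scaleR_conv_of_real)
qed

definition gauss0 :: "'a::euclidean_space measure" where
  "gauss0 = density lborel (\<lambda>z. ennreal (\<Prod>b\<in>Basis. std_normal_density (z \<bullet> b)))"

lemma sets_gauss0[simp]: "sets gauss0 = sets borel"
  unfolding gauss0_def by simp

lemma prob_space_gauss0: "prob_space (gauss0 :: 'a::euclidean_space measure)"
proof
  have one: "(\<integral>\<^sup>+x. ennreal (std_normal_density x) \<partial>lborel) = 1"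
  proof -
    interpret prob_space std_normal_distribution by (rule prob_space_normal_density) simp
    have "emeasure std_normal_distribution UNIV = 1" using emeasure_space_1 by simp
    then show ?thesis by (simp add: emeasure_density)
  qed
  have "emeasure (gauss0 :: 'a measure) UNIV = (\<integral>\<^sup>+(z::'a). ennreal (\<Prod>b\<in>Basis. std_normal_density (z \<bullet> b)) \<partial>lborel)"
    unfolding gauss0_def by (simp add: emeasure_density)
  also have "\<dots> = (\<integral>\<^sup>+(z::'a). (\<Prod>b\<in>Basis. ennreal (std_normal_density (z \<bullet> b))) \<partial>lborel)"
    by (simp add: prod_ennreal)
  also have "\<dots> = (\<Prod>b\<in>(Basis::'a set). (\<integral>\<^sup>+x. ennreal (std_normal_density x) \<partial>lborel))"
    by (rule nn_integral_lborel_prod) auto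
  also have "\<dots> = 1" by (simp add: one)
  finally have "emeasure (gauss0 :: 'a measure) UNIV = 1" .
  moreover have "space (gauss0 :: 'a measure) = UNIV" by (simp add: gauss0_def)
  ultimately show "emeasure (gauss0 :: 'a measure) (space gauss0) = 1" by simp
qed

lemma char_gauss0:
  fixes t :: "'a::euclidean_space"
  shows "(\<integral>z. iexp (t \<bullet> z) \<partial>gauss0) = exp (- ((norm t)^2) / 2)"
proof -
  interpret P: product_sigma_finite "\<lambda>_::'a. lborel :: real measure"
    by (simp add: product_sigma_finite_def lborel.sigma_finite_measure_axioms)
  define \<Phi> where "\<Phi> f = (\<Sum>b\<in>Basis. f b *\<^sub>R b)" for f :: "'a \<Rightarrow> real"
  define G where "G b x = complex_of_real (std_normal_density x) * iexp ((t \<bullet> b) * x)" for b x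
  have Phib: "\<Phi> f \<bullet> b = f b" if "b \<in> Basis" for f b
    unfolding \<Phi>_def using that by (simp add: inner_sum_left inner_Basis if_distrib cong: if_cong)
  have tPhi: "t \<bullet> \<Phi> f = (\<Sum>b\<in>Basis. (t \<bullet> b) * f b)" for f
    unfolding \<Phi>_def by (simp add: inner_sum_right mult.commute)
  have mPhi: "\<Phi> \<in> measurable (\<Pi>\<^sub>M b\<in>Basis. lborel) borel" unfolding \<Phi>_def[abs_def] by measurable
  have "(\<integral>z. iexp (t \<bullet> z) \<partial>gauss0)
      = (\<integral>z. (\<Prod>b\<in>Basis. std_normal_density (z \<bullet> b)) *\<^sub>R iexp (t \<bullet> z) \<partial>lborel)"
    unfolding gauss0_def by (subst integral_density) (auto simp: prod_nonneg)
  also have "\<dots> = (\<integral>z. (\<Prod>b\<in>Basis. std_normal_density (z \<bullet> b)) *\<^sub>R iexp (t \<bullet> z)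
        \<partial>distr (\<Pi>\<^sub>M b\<in>Basis. lborel) borel \<Phi>)"
    unfolding \<Phi>_def[abs_def] by (simp flip: lborel_eq)
  also have "\<dots> = (\<integral>f. (\<Prod>b\<in>Basis. std_normal_density (\<Phi> f \<bullet> b)) *\<^sub>R iexp (t \<bullet> \<Phi> f)
        \<partial>(\<Pi>\<^sub>M b\<in>Basis. lborel))"
    by (rule integral_distr[OF mPhi]) simp
  also have "\<dots> = (\<integral>f. (\<Prod>b\<in>Basis. G b (f b)) \<partial>(\<Pi>\<^sub>M b\<in>Basis. lborel))"
  proof (rule Bochner_Integration.integral_cong[OF refl])
    fix f :: "'a \<Rightarrow> real"
    have "iexp (t \<bullet> \<Phi> f) = (\<Prod>b\<in>Basis. iexp ((t \<bullet> b) * f b))"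
      unfolding tPhi by (simp add: sum_distrib_left exp_sum)
    then show "(\<Prod>b\<in>Basis. std_normal_density (\<Phi> f \<bullet> b)) *\<^sub>R iexp (t \<bullet> \<Phi> f) = (\<Prod>b\<in>Basis. G b (f b))"
      unfolding G_def by (simp add: Phib scaleR_conv_of_real prod.distrib)
  qed
  also have "\<dots> = (\<Prod>b\<in>Basis. (\<integral>x. G b x \<partial>lborel))"
    by (rule P.product_integral_prod) (simp, unfold G_def, rule std_normal_char_integrable)
  also have "\<dots> = (\<Prod>b\<in>Basis. complex_of_real (exp (- ((t \<bullet> b)^2) / 2)))"
    unfolding G_def by (simp only: std_normal_char)
  also have "\<dots> = complex_of_real (exp (- ((norm t)^2) / 2))"
  proof -
    have "(norm t)^2 = t \<bullet> t" by (simp add: power2_norm_eq_inner)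
    also have "\<dots> = (\<Sum>b\<in>Basis. (t \<bullet> b) * (t \<bullet> b))" by (rule euclidean_inner)
    finally have "(norm t)^2 = (\<Sum>b\<in>Basis. (t \<bullet> b)^2)" by (simp add: power2_eq_square)
    then have "exp (- ((norm t)^2) / 2) = (\<Prod>b\<in>Basis. exp (- ((t \<bullet> b)^2) / 2))"
      by (simp add: exp_sum[symmetric] sum_divide_distrib sum_negf)
    then show ?thesis by simp
  qed
  finally show ?thesis .
qed


definition qf :: "nat \<Rightarrow> (nat \<Rightarrow> nat \<Rightarrow> real) \<Rightarrow> (nat \<Rightarrow> real) \<Rightarrow> real" where
  "qf n g c = (\<Sum>i<n. \<Sum>j<n. c i * c j * g i j)"

lemma qf_Suc:
  assumes sym: "\<And>i j. g i j = g j i"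
  shows "qf (Suc n) g c = qf n g c + 2 * c n * (\<Sum>i<n. c i * g i n) + c n * c n * g n n"
proof -
  have "qf (Suc n) g c = (\<Sum>i<n. (\<Sum>j<n. c i * c j * g i j) + c i * c n * g i n)
          + ((\<Sum>j<n. c n * c j * g n j) + c n * c n * g n n)"
    unfolding qf_def by simp
  also have "\<dots> = qf n g c + (\<Sum>i<n. c i * c n * g i n) + (\<Sum>j<n. c n * c j * g n j) + c n * c n * g n n"
    unfolding qf_def by (simp add: sum.distrib)
  also have "(\<Sum>j<n. c n * c j * g n j) = (\<Sum>i<n. c i * c n * g i n)"
    using sym by (intro sum.cong) (auto simp: mult.commute)
  also have "(\<Sum>i<n. c i * c n * g i n) = c n * (\<Sum>i<n. c i * g i n)"
    by (simp add: sum_distrib_left mult_ac)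
  finally show ?thesis by simp
qed

lemma qf_cong:
  assumes "\<And>i. i < n \<Longrightarrow> c i = c' i"
  shows "qf n g c = qf n g c'"
  unfolding qf_def using assms by (intro sum.cong refl) auto

lemma qf_schur:
  assumes sym: "\<And>i j. g i j = g j i"
  shows "qf n (\<lambda>i j. g i j - g i n * g n j / p) c = qf n g c - (\<Sum>i<n. c i * g i n)^2 / p"
proof -
  have "qf n (\<lambda>i j. g i j - g i n * g n j / p) c
      = qf n g c - (\<Sum>i<n. \<Sum>j<n. (c i * g i n) * (c j * g j n) / p)"
    unfolding qf_def by (simp add: sum_subtractf right_diff_distrib sym[of n] mult_ac)
  also have "(\<Sum>i<n. \<Sum>j<n. (c i * g i n) * (c j * g j n) / p) = (\<Sum>i<n. c i * g i n)^2 / p"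
    by (simp add: power2_eq_square sum_product sum_divide_distrib)
  finally show ?thesis .
qed

lemma cholesky:
  fixes g :: "nat \<Rightarrow> nat \<Rightarrow> real"
  assumes "\<And>i j. g i j = g j i"
    and "\<And>c. (\<exists>k<n. c k \<noteq> 0) \<Longrightarrow> 0 < qf n g c"
  shows "\<exists>L. \<forall>c. qf n g c = (\<Sum>i<n. (\<Sum>k<n. L i k * c k)^2)"
  using assms
proof (induction n arbitrary: g)
  case 0
  then show ?case by (simp add: qf_def)
next
  case (Suc n)
  note sym = Suc.prems(1) and pd = Suc.prems(2)
  define p where "p = g n n"
  have p: "0 < p"
  proof -
    have "0 < qf (Suc n) g (\<lambda>k. if k = n then 1 else 0)" by (rule pd) auto
    then show ?thesis using qf_Suc[where g=g and n=n and c="\<lambda>k. if k = n then (1::real) else 0", OF sym]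
      unfolding p_def by (simp add: qf_def)
  qed
  define g' where "g' i j = g i j - g i n * g n j / p" for i j
  have sym': "g' i j = g' j i" for i j unfolding g'_def using sym by (simp add: mult.commute)
  define s where "s c = (\<Sum>i<n. c i * g i n)" for c
  have decomp: "qf (Suc n) g c = p * (c n + s c / p)^2 + qf n g' c" for c
  proof -
    have A: "qf (Suc n) g c = qf n g c + 2 * c n * s c + c n * c n * p"
      using qf_Suc[where g=g and n=n and c=c, OF sym] unfolding s_def p_def by simp
    have B: "qf n g' c = qf n g c - (s c)^2 / p" unfolding g'_def s_def p_def by (rule qf_schur[OF sym])
    have "p * (c n + s c / p)^2 = p * (c n)^2 + 2 * c n * s c + (s c)^2 / p"
      using p by (simp add: field_simps power2_eq_square)
    then show ?thesis using A B by (simp add: power2_eq_square)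
  qed
  have pd': "0 < qf n g' c" if "\<exists>k<n. c k \<noteq> 0" for c
  proof -
    define c' where "c' = c(n := - s c / p)"
    have sc: "s c' = s c" unfolding s_def c'_def by (intro sum.cong) auto
    have "0 < qf (Suc n) g c'" using that by (intro pd) (auto simp: c'_def)
    also have "qf (Suc n) g c' = qf n g' c'" using decomp[of c'] sc p by (simp add: c'_def)
    also have "\<dots> = qf n g' c" by (rule qf_cong) (simp add: c'_def)
    finally show ?thesis .
  qed
  obtain L' where L': "\<And>c. qf n g' c = (\<Sum>i<n. (\<Sum>k<n. L' i k * c k)^2)"
    using Suc.IH[OF sym' pd'] by blast
  define L where "L i k = (if i < n then (if k < n then L' i k else 0)
      else (if k < n then g k n / sqrt p else sqrt p))" for i k
  show ?case
  proof (rule exI[of _ L], intro allI)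
    fix c
    have rows: "(\<Sum>k<Suc n. L i k * c k) = (\<Sum>k<n. L' i k * c k)" if "i < n" for i
      using that unfolding L_def by simp
    have last: "(\<Sum>k<Suc n. L n k * c k) = sqrt p * (c n + s c / p)"
    proof -
      have "(\<Sum>k<Suc n. L n k * c k) = (\<Sum>k<n. g k n / sqrt p * c k) + sqrt p * c n"
        unfolding L_def by simp
      also have "(\<Sum>k<n. g k n / sqrt p * c k) = s c / sqrt p"
        unfolding s_def by (simp add: sum_divide_distrib mult_ac)
      also have "s c / sqrt p = sqrt p * (s c / p)"
        using p by (simp add: field_simps)
      finally show ?thesis by (simp add: algebra_simps)
    qed
    have "(\<Sum>i<Suc n. (\<Sum>k<Suc n. L i k * c k)^2)
        = (\<Sum>i<n. (\<Sum>k<n. L' i k * c k)^2) + (sqrt p * (c n + s c / p))^2"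
      using rows last by simp
    also have "\<dots> = qf n g' c + p * (c n + s c / p)^2"
      using p by (simp add: L' power_mult_distrib)
    also have "\<dots> = qf (Suc n) g c" using decomp[of c] by simp
    finally show "qf (Suc n) g c = (\<Sum>i<Suc n. (\<Sum>k<Suc n. L i k * c k)^2)" by simp
  qed
qed


lemma funpow_deriv_Suc: "(deriv ^^ Suc k) f = deriv ((deriv ^^ k) f)"
  by simp

lemma psi_deriv:
  fixes phi :: "real \<Rightarrow> real"
  assumes "smooth_fun phi"
  shows "((deriv ^^ k) phi has_real_derivative (deriv ^^ Suc k) phi x) (at x)"
proof -
  have "(deriv ^^ k) phi differentiable (at x)" using assms unfolding smooth_fun_def by blast
  then show ?thesis unfolding funpow_deriv_Suc by (simp add: DERIV_deriv_iff_real_differentiable)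
qed

lemma psi_isCont:
  fixes phi :: "real \<Rightarrow> real"
  assumes "smooth_fun phi"
  shows "isCont ((deriv ^^ k) phi) x"
  using psi_deriv[OF assms] by (rule DERIV_isCont)

lemma psi_cont:
  fixes phi :: "real \<Rightarrow> real"
  assumes "smooth_fun phi"
  shows "continuous_on UNIV ((deriv ^^ k) phi)"
  using psi_isCont[OF assms] by (simp add: continuous_at_imp_continuous_on)

lemma psi_supp:
  fixes phi :: "real \<Rightarrow> real" and a b x :: real
  assumes "\<And>x. x \<notin> {a..b} \<Longrightarrow> phi x = 0"
  shows "x \<notin> {a..b} \<Longrightarrow> (deriv ^^ k) phi x = 0"
proof (induction k arbitrary: x)
  case 0 then show ?case using assms by simp
next
  case (Suc k)
  have ev: "eventually (\<lambda>y. (deriv ^^ k) phi y = (\<lambda>_. 0) y) (nhds x)"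
    unfolding eventually_nhds
    by (rule exI[of _ "- {a..b}"]) (use Suc in \<open>auto intro!: open_Compl closed_atLeastAtMost\<close>)
  have "((\<lambda>_. 0::real) has_real_derivative 0) (at x)" by simp
  then have "((deriv ^^ k) phi has_real_derivative 0) (at x)"
    using DERIV_cong_ev[OF refl ev refl] by simp
  then show ?case unfolding funpow_deriv_Suc by (rule DERIV_imp_deriv)
qed

lemma psi_smooth:
  fixes phi :: "real \<Rightarrow> real"
  assumes "smooth_fun phi"
  shows "smooth_fun ((deriv ^^ k) phi)"
  unfolding smooth_fun_def
proof (intro allI)
  fix n x
  have "(deriv ^^ n) ((deriv ^^ k) phi) = (deriv ^^ (n + k)) phi" by (simp add: funpow_add)
  then show "(deriv ^^ n) ((deriv ^^ k) phi) differentiable at x"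
    using assms unfolding smooth_fun_def by metis
qed

lemma psi_test:
  fixes phi :: "real \<Rightarrow> real"
  assumes "test_fun phi"
  shows "test_fun ((deriv ^^ k) phi)"
proof -
  obtain a b where ab: "0 < a" "a \<le> b" "\<And>x. x \<notin> {a..b} \<Longrightarrow> phi x = 0"
    using assms unfolding test_fun_def by blast
  show ?thesis unfolding test_fun_def
    using psi_smooth[where phi=phi and k=k] assms psi_supp[where a=a and b=b and phi=phi, OF ab(3)] ab(1,2)
    unfolding test_fun_def by blast
qed

lemma set_integrable_supp:
  fixes F :: "real \<Rightarrow> real"
  assumes "continuous_on UNIV F" "0 < a" "\<And>x. x \<notin> {a..b} \<Longrightarrow> F x = 0"
  shows "integrable lborel (\<lambda>x. indicator {0<..} x * F x)"
proof -
  have "(\<lambda>x. indicator {0<..} x * F x) = (\<lambda>x. F x * indicator {a..b} x)"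
  proof
    fix x show "indicator {0<..} x * F x = F x * (indicator {a..b} x :: real)"
      using assms(2) assms(3)[of x] by (cases "x \<in> {a..b}") (auto simp: indicator_def)
  qed
  moreover have "integrable lborel (\<lambda>x. F x * indicator {a..b} x)"
    by (rule borel_integrable_atLeastAtMost) (use assms(1) in \<open>simp add: continuous_on_eq_continuous_at\<close>)
  ultimately show ?thesis by simp
qed


lemma gronwall_chain:
  fixes \<psi> :: "nat \<Rightarrow> real \<Rightarrow> real" and d :: "nat \<Rightarrow> real"
  assumes der: "\<And>k x. (\<psi> k has_real_derivative \<psi> (Suc k) x) (at x)"
    and rel: "\<And>x. \<psi> m x = (\<Sum>k<m. d k * \<psi> k x)"
    and m: "0 < m"
    and left: "\<And>k x. x < a \<Longrightarrow> \<psi> k x = 0"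
  shows "\<psi> 0 x = 0"
proof (cases "x < a")
  case True then show ?thesis by (rule left)
next
  case False
  define E where "E y = (\<Sum>k<m. (\<psi> k y)^2)" for y
  define E' where "E' y = (\<Sum>k<m. 2 * \<psi> k y * \<psi> (Suc k) y)" for y
  define B where "B = 1 + (\<Sum>k<m. \<bar>d k\<bar>)"
  define K where "K = 2 * real m * B"
  have B1: "1 \<le> B" unfolding B_def by (simp add: sum_nonneg)
  have E0: "0 \<le> E y" for y unfolding E_def by (simp add: sum_nonneg)
  have dE: "(E has_real_derivative E' y) (at y)" for y
  proof -
    have "((\<lambda>y. (\<psi> k y)^2) has_real_derivative 2 * \<psi> k y * \<psi> (Suc k) y) (at y)" for k
      using DERIV_power[OF der[of k y], of 2] by (simp add: mult_ac)
    then show ?thesis unfolding E_def[abs_def] E'_def by (intro DERIV_sum) auto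
  qed
  have sq: "\<bar>\<psi> k y\<bar> \<le> sqrt (E y)" if "k < m" for k y
  proof -
    have "(\<psi> k y)^2 \<le> E y" unfolding E_def
      using that by (intro member_le_sum) auto
    then show ?thesis by (metis real_sqrt_abs real_sqrt_le_mono)
  qed
  have sqS: "\<bar>\<psi> (Suc k) y\<bar> \<le> B * sqrt (E y)" if "k < m" for k y
  proof (cases "Suc k < m")
    case True
    then have "\<bar>\<psi> (Suc k) y\<bar> \<le> sqrt (E y)" by (rule sq)
    also have "\<dots> \<le> B * sqrt (E y)" using B1 E0[of y] by (simp add: mult_le_cancel_right1)
    finally show ?thesis .
  next
    case False
    then have km: "Suc k = m" using that by simp
    have "\<bar>\<psi> (Suc k) y\<bar> = \<bar>\<Sum>j<m. d j * \<psi> j y\<bar>" using rel km by simp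
    also have "\<dots> \<le> (\<Sum>j<m. \<bar>d j\<bar> * \<bar>\<psi> j y\<bar>)" by (rule order_trans[OF sum_abs]) (simp add: abs_mult)
    also have "\<dots> \<le> (\<Sum>j<m. \<bar>d j\<bar> * sqrt (E y))" by (intro sum_mono mult_left_mono sq) auto
    also have "\<dots> = (B - 1) * sqrt (E y)" unfolding B_def by (simp add: sum_distrib_right)
    also have "\<dots> \<le> B * sqrt (E y)" using E0[of y] by (simp add: algebra_simps)
    finally show ?thesis .
  qed
  have bound: "E' y \<le> K * E y" for y
  proof -
    have "2 * \<psi> k y * \<psi> (Suc k) y \<le> 2 * B * E y" if "k < m" for k
    proof -
      have "2 * \<psi> k y * \<psi> (Suc k) y \<le> 2 * (\<bar>\<psi> k y\<bar> * \<bar>\<psi> (Suc k) y\<bar>)"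
        by (simp add: abs_mult[symmetric] mult.assoc)
      also have "\<dots> \<le> 2 * (sqrt (E y) * (B * sqrt (E y)))"
        using sq[OF that, of y] sqS[OF that, of y] E0[of y] B1 by (intro mult_left_mono mult_mono) auto
      also have "\<dots> = 2 * B * E y" using E0[of y] by (simp add: algebra_simps)
      finally show ?thesis .
    qed
    then have "E' y \<le> (\<Sum>k<m. 2 * B * E y)" unfolding E'_def by (intro sum_mono) auto
    also have "\<dots> = K * E y" unfolding K_def by simp
    finally show ?thesis .
  qed
  define h where "h y = exp (- K * y) * E y" for y
  have dh: "(h has_real_derivative exp (- K * y) * (E' y - K * E y)) (at y)" for y
  proof -
    have "((\<lambda>y. exp (- K * y)) has_real_derivative exp (- K * y) * (- K)) (at y)"
      by (auto intro!: derivative_eq_intros)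
    from DERIV_mult[OF this dE[of y]] show ?thesis
      unfolding h_def[abs_def] by (simp add: algebra_simps)
  qed
  have hx: "h x \<le> h (a - 1)"
  proof (rule DERIV_nonpos_imp_nonincreasing[of "a - 1" x h])
    show "a - 1 \<le> x" using False by simp
    fix y
    show "\<exists>D. (h has_real_derivative D) (at y) \<and> D \<le> 0"
      using dh[of y] bound[of y] by (intro exI[of _ "exp (- K * y) * (E' y - K * E y)"])
        (simp add: mult_nonneg_nonpos)
  qed
  have "E (a - 1) = 0" unfolding E_def using left[of "a - 1"] by simp
  then have "h x \<le> 0" using hx unfolding h_def by simp
  then have "E x \<le> 0" unfolding h_def by (simp add: mult_le_0_iff)
  then have "E x = 0" using E0[of x] by simp
  moreover have "(\<psi> 0 x)^2 \<le> E x" unfolding E_def using m by (intro member_le_sum) auto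
  ultimately show ?thesis by simp
qed

lemma lin_indep:
  fixes phi :: "real \<Rightarrow> real" and c :: "nat \<Rightarrow> real"
  assumes sm: "smooth_fun phi" and supp: "\<And>x. x \<notin> {a..b} \<Longrightarrow> phi x = 0"
    and nz: "\<exists>x. phi x \<noteq> 0"
    and zero: "\<And>x. (\<Sum>i<n. c i * (deriv ^^ i) phi x) = 0"
  shows "\<forall>i<n. c i = 0"
proof (rule ccontr)
  assume "\<not> (\<forall>i<n. c i = 0)"
  then have ne: "{i. i < n \<and> c i \<noteq> 0} \<noteq> {}" by auto
  define m where "m = Max {i. i < n \<and> c i \<noteq> 0}"
  have fin: "finite {i. i < n \<and> c i \<noteq> 0}" by simp
  have m: "m < n" "c m \<noteq> 0" using Max_in[OF fin ne] unfolding m_def by auto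
  have above: "c i = 0" if "m < i" "i < n" for i
    using Max_ge[OF fin, of i] that unfolding m_def[symmetric] by auto
  define \<psi> where "\<psi> k = (deriv ^^ k) phi" for k
  have sum_m: "(\<Sum>i<Suc m. c i * \<psi> i x) = 0" for x
  proof -
    have "(\<Sum>i<n. c i * \<psi> i x) = (\<Sum>i<Suc m. c i * \<psi> i x)"
      by (rule sum.mono_neutral_right) (use m above in auto)
    then show ?thesis using zero[of x] unfolding \<psi>_def by simp
  qed
  have phi0: "phi x = 0" for x
  proof (cases "m = 0")
    case True
    then show ?thesis using sum_m[of x] m unfolding \<psi>_def by simp
  next
    case False
    define d where "d k = - c k / c m" for k
    have rel: "\<psi> m y = (\<Sum>k<m. d k * \<psi> k y)" for y
    proof -
      have "(\<Sum>i<m. c i * \<psi> i y) + c m * \<psi> m y = 0" using sum_m[of y] by simp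
      then have "\<psi> m y = - (\<Sum>i<m. c i * \<psi> i y) / c m" using m(2) by (simp add: field_simps)
      then show ?thesis unfolding d_def by (simp add: sum_divide_distrib sum_negf)
    qed
    have der: "(\<psi> k has_real_derivative \<psi> (Suc k) y) (at y)" for k y
      unfolding \<psi>_def by (rule psi_deriv[OF sm])
    have left: "\<psi> k y = 0" if "y < a" for k y
      unfolding \<psi>_def by (rule psi_supp[OF supp]) (use that in auto)
    have "\<psi> 0 x = 0" by (rule gronwall_chain[OF der rel _ left]) (use False in simp)
    then show ?thesis unfolding \<psi>_def by simp
  qed
  then show False using nz by simp
qed


definition gram :: "(real \<Rightarrow> real) \<Rightarrow> nat \<Rightarrow> nat \<Rightarrow> real" where
  "gram phi i j = (LINT x:{0<..}|lborel. (deriv ^^ i) phi x * (deriv ^^ j) phi x)"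

lemma gram_sym: "gram phi i j = gram phi j i"
  unfolding gram_def by (simp add: mult.commute)

lemma qf_gram:
  fixes phi :: "real \<Rightarrow> real"
  assumes tf: "test_fun phi"
  shows "qf n (gram phi) c = (\<integral>x. indicator {0<..} x * (\<Sum>i<n. c i * (deriv ^^ i) phi x)^2 \<partial>lborel)"
proof -
  obtain a b where ab: "0 < a" "a \<le> b" "\<And>x. x \<notin> {a..b} \<Longrightarrow> phi x = 0"
    and sm: "smooth_fun phi" using tf unfolding test_fun_def by blast
  define \<psi> where "\<psi> k = (deriv ^^ k) phi" for k
  have int: "integrable lborel (\<lambda>x. indicator {0<..} x * (\<psi> i x * \<psi> j x))" for i j
  proof (rule set_integrable_supp[OF _ ab(1)])
    show "continuous_on UNIV (\<lambda>x. \<psi> i x * \<psi> j x)" unfolding \<psi>_def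
      by (intro continuous_intros psi_cont[OF sm])
    show "\<psi> i x * \<psi> j x = 0" if "x \<notin> {a..b}" for x
      unfolding \<psi>_def using psi_supp[where phi=phi, OF ab(3) that] by simp
  qed
  have pw: "indicator {0<..} x * (\<Sum>i<n. c i * \<psi> i x)^2
      = (\<Sum>i<n. \<Sum>j<n. c i * c j * (indicator {0<..} x * (\<psi> i x * \<psi> j x)))" for x
    by (simp add: power2_eq_square sum_product sum_distrib_left mult_ac)
  define f where "f i j x = c i * c j * (indicator {0<..} x * (\<psi> i x * \<psi> j x))" for i j x
  have i1: "integrable lborel (f i j)" for i j
    unfolding f_def[abs_def] by (intro integrable_mult_right int)
  have i2: "integrable lborel (\<lambda>x. \<Sum>j<n. f i j x)" for i
    using i1 by (auto intro!: integrable_sum)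
  have "(\<integral>x. indicator {0<..} x * (\<Sum>i<n. c i * \<psi> i x)^2 \<partial>lborel)
      = (\<integral>x. (\<Sum>i<n. \<Sum>j<n. f i j x) \<partial>lborel)"
    unfolding pw f_def ..
  also have "\<dots> = (\<Sum>i<n. (\<integral>x. (\<Sum>j<n. f i j x) \<partial>lborel))"
    by (rule Bochner_Integration.integral_sum) (rule i2)
  also have "\<dots> = (\<Sum>i<n. \<Sum>j<n. (\<integral>x. f i j x \<partial>lborel))"
    by (intro sum.cong refl Bochner_Integration.integral_sum i1)
  also have "\<dots> = (\<Sum>i<n. \<Sum>j<n. c i * c j * (\<integral>x. indicator {0<..} x * (\<psi> i x * \<psi> j x) \<partial>lborel))"
    unfolding f_def by simp
  also have "\<dots> = qf n (gram phi) c"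
    unfolding qf_def gram_def set_lebesgue_integral_def \<psi>_def by simp
  finally show ?thesis unfolding \<psi>_def by simp
qed

lemma gram_pd:
  fixes phi :: "real \<Rightarrow> real"
  assumes tf: "test_fun phi" and nz: "\<exists>x. phi x \<noteq> 0" and ck: "\<exists>k<n. c k \<noteq> 0"
  shows "0 < qf n (gram phi) c"
proof -
  obtain a b where ab: "0 < a" "a \<le> b" "\<And>x. x \<notin> {a..b} \<Longrightarrow> phi x = 0"
    and sm: "smooth_fun phi" using tf unfolding test_fun_def by blast
  define F where "F x = (\<Sum>i<n. c i * (deriv ^^ i) phi x)" for x
  have cF: "continuous_on UNIV F" unfolding F_def[abs_def]
    by (intro continuous_intros psi_cont[OF sm])
  have Fsupp: "F x = 0" if "x \<notin> {a..b}" for x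
    unfolding F_def using psi_supp[where phi=phi, OF ab(3) that] by simp
  have int: "integrable lborel (\<lambda>x. indicator {0<..} x * (F x)^2)"
    by (rule set_integrable_supp[OF _ ab(1), where b=b]) (auto intro!: continuous_intros cF simp: Fsupp)
  have q: "qf n (gram phi) c = (\<integral>x. indicator {0<..} x * (F x)^2 \<partial>lborel)"
    unfolding F_def by (rule qf_gram[OF tf])
  have nn: "0 \<le> qf n (gram phi) c" unfolding q by (intro integral_nonneg_AE) auto
  show ?thesis
  proof (rule ccontr)
    assume "\<not> 0 < qf n (gram phi) c"
    then have "qf n (gram phi) c = 0" using nn by linarith
    then have "(\<integral>x. indicator {0<..} x * (F x)^2 \<partial>lborel) = 0" using q by simp
    then have "AE x in lborel. indicator {0<..} x * (F x)^2 = 0"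
      using integral_nonneg_eq_0_iff_AE[OF int] by simp
    then have "AE x in lborel. x \<in> {0<..} \<longrightarrow> x \<in> {x. F x = 0}"
      by eventually_elim (auto simp: indicator_def)
    then have ae: "AE x \<in> {0<..} in lebesgue. x \<in> {x. F x = 0}" by (rule AE_completion)
    have cl: "closed {x. F x = 0}" by (rule closed_Collect_eq[OF cF continuous_on_const])
    have F0: "F x = 0" for x
    proof (cases "0 < x")
      case True
      then show ?thesis using mem_closed_if_AE_lebesgue_open[OF open_greaterThan cl ae, of x] by simp
    next
      case False
      then show ?thesis using Fsupp ab(1) by simp
    qed
    have "\<forall>i<n. c i = 0"
    proof (rule lin_indep[OF sm ab(3) nz])
      fix x show "(\<Sum>i<n. c i * (deriv ^^ i) phi x) = 0" using F0[of x] unfolding F_def .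
    qed
    then show False using ck by auto
  qed
qed

lemma char_centred_gaussian:
  assumes ps: "prob_space M" and cg: "centred_gaussian M Y v"
  shows "(\<integral>\<omega>. iexp (Y \<omega>) \<partial>M) = exp (- v / 2)"
proof -
  interpret prob_space M by fact
  have mY: "Y \<in> borel_measurable M" and v0: "0 \<le> v" using cg unfolding centred_gaussian_def by auto
  show ?thesis
  proof (cases "v = 0")
    case True
    then have ae: "AE \<omega> in M. Y \<omega> = 0" using cg unfolding centred_gaussian_def by simp
    have "(\<integral>\<omega>. iexp (Y \<omega>) \<partial>M) = (\<integral>\<omega>. 1 \<partial>M)"
      by (rule integral_cong_AE) (use ae mY in auto)
    then show ?thesis using True by (simp add: prob_space)
  next
    case False
    define \<sigma> where "\<sigma> = sqrt v"
    have s: "0 < \<sigma>" unfolding \<sigma>_def using v0 False by simp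
    have dY: "distributed M lborel Y (normal_density 0 \<sigma>)"
      using cg False unfolding centred_gaussian_def \<sigma>_def by simp
    then have dZ: "distributed M lborel (\<lambda>x. (Y x - 0) / \<sigma>) std_normal_density"
      using normal_standard_normal_convert[OF s] by simp
    define Z where "Z x = Y x / \<sigma>" for x
    have dZ': "distr M lborel Z = std_normal_distribution" and mZ: "Z \<in> measurable M lborel"
      using dZ unfolding distributed_def Z_def by auto
    have "(\<integral>\<omega>. iexp (Y \<omega>) \<partial>M) = (\<integral>\<omega>. iexp (\<sigma> * Z \<omega>) \<partial>M)"
      unfolding Z_def using s by simp
    also have "\<dots> = (\<integral>z. iexp (\<sigma> * z) \<partial>distr M lborel Z)"
      by (rule integral_distr[symmetric, OF mZ]) simp
    also have "\<dots> = char std_normal_distribution \<sigma>" unfolding dZ' char_def by simp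
    also have "\<dots> = exp (- (\<sigma>^2) / 2)" by (simp add: char_std_normal_distribution)
    also have "\<sigma>^2 = v" unfolding \<sigma>_def using v0 by simp
    finally show ?thesis by simp
  qed
qed


lemma vec4_nth:
  "(vector [a,b,c,d] :: real^4) $ 1 = a" "(vector [a,b,c,d] :: real^4) $ 2 = b"
  "(vector [a,b,c,d] :: real^4) $ 3 = c" "(vector [a,b,c,d] :: real^4) $ 4 = d"
  by (simp_all add: vector_def)

lemma sum4_nat: "(\<Sum>i<(4::nat). f i) = f 0 + f 1 + f 2 + (f 3 :: real)"
  by (simp add: eval_nat_numeral)

definition cc :: "real^4 \<Rightarrow> nat \<Rightarrow> real" where
  "cc t k = (if k = 0 then t$1 else if k = 1 then - t$2 else if k = 2 then t$3 else - t$4)"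

definition ni :: "4 \<Rightarrow> nat" where
  "ni a = (if a = 1 then 0 else if a = 2 then 1 else if a = 3 then 2 else 3)"

lemma ni_vals: "ni 1 = 0" "ni 2 = 1" "ni 3 = 2" "ni 4 = 3"
  by (simp_all add: ni_def)

lemma inner_vec4:
  "t \<bullet> (vector [z 0, - z 1, z 2, - z 3] :: real^4) = (\<Sum>i<4. cc t i * z i)"
  by (simp add: inner_vec_def sum_4 vec4_nth sum4_nat cc_def)

lemma cc_nonzero:
  assumes "t \<noteq> 0" shows "\<exists>k<4. cc t k \<noteq> 0"
proof -
  obtain i where i: "t $ i \<noteq> 0" using assms by (auto simp: vec_eq_iff)
  consider "i = 1" | "i = 2" | "i = 3" | "i = 4" using exhaust_4 by blast
  then show ?thesis
  proof cases
    case 1 then show ?thesis using i by (intro exI[of _ 0]) (simp add: cc_def)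
  next
    case 2 then show ?thesis using i by (intro exI[of _ 1]) (simp add: cc_def)
  next
    case 3 then show ?thesis using i by (intro exI[of _ 2]) (simp add: cc_def)
  next
    case 4 then show ?thesis using i by (intro exI[of _ 3]) (simp add: cc_def)
  qed
qed

definition Amap :: "(nat \<Rightarrow> nat \<Rightarrow> real) \<Rightarrow> real^4 \<Rightarrow> real^4" where
  "Amap L t = (\<chi> a. \<Sum>k<4. L (ni a) k * cc t k)"

lemma norm_Amap: "(norm (Amap L t))^2 = (\<Sum>i<4. (\<Sum>k<4. L i k * cc t k)^2)"
proof -
  have "(norm (Amap L t))^2 = Amap L t \<bullet> Amap L t" by (rule power2_norm_eq_inner)
  also have "\<dots> = (\<Sum>i<4. (\<Sum>k<4. L i k * cc t k)^2)"
    unfolding inner_vec_def sum_4 Amap_def by (simp add: ni_vals power2_eq_square sum4_nat)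
  finally show ?thesis .
qed

lemma cc_add: "cc (x + y) k = cc x k + cc y k"
  by (simp add: cc_def)
lemma cc_scale: "cc (r *\<^sub>R x) k = r * cc x k"
  by (simp add: cc_def)

lemma linear_Amap: "linear (Amap L)"
proof (rule linearI)
  fix x y :: "real^4" and r :: real
  show "Amap L (x + y) = Amap L x + Amap L y"
    by (simp add: Amap_def vec_eq_iff cc_add distrib_left sum.distrib)
  show "Amap L (r *\<^sub>R x) = r *\<^sub>R Amap L x"
    by (simp add: Amap_def vec_eq_iff cc_scale sum_distrib_left mult_ac)
qed



theorem lemma4p1:
  fixes M :: "'a measure" and W :: "(real \<Rightarrow> real) \<Rightarrow> 'a \<Rightarrow> real" and phi :: "real \<Rightarrow> real"
  assumes "white_noise M W"
    and "test_fun phi"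
    and "\<exists>x. phi x \<noteq> 0"
  shows "absolutely_continuous lborel
           (distr M lborel (\<lambda>\<omega>. vector [deriv_pair W 0 phi \<omega>, deriv_pair W 1 phi \<omega>,
                                          deriv_pair W 2 phi \<omega>, deriv_pair W 3 phi \<omega>] :: real ^ 4))"
proof -
  have ps: "prob_space M" using assms(1) unfolding white_noise_def by blast
  interpret prob_space M by fact
  have meas: "\<And>f. test_fun f \<Longrightarrow> W f \<in> borel_measurable M"
    using assms(1) unfolding white_noise_def by blast
  have gauss: "\<And>(n::nat) (phis :: nat \<Rightarrow> real \<Rightarrow> real) (c :: nat \<Rightarrow> real). (\<forall>i<n. test_fun (phis i)) \<Longrightarrow>
      centred_gaussian M (\<lambda>\<omega>. \<Sum>i<n. c i * W (phis i) \<omega>)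
        (\<Sum>i<n. \<Sum>j<n. c i * c j * (LINT x:{0<..}|lborel. phis i x * phis j x))"
    using assms(1) unfolding white_noise_def by blast
  define \<psi> where "\<psi> k = (deriv ^^ k) phi" for k
  have t\<psi>: "test_fun (\<psi> k)" for k unfolding \<psi>_def by (rule psi_test[OF assms(2)])
  define X where "X \<omega> = (vector [deriv_pair W 0 phi \<omega>, deriv_pair W 1 phi \<omega>,
      deriv_pair W 2 phi \<omega>, deriv_pair W 3 phi \<omega>] :: real^4)" for \<omega>
  have Xeq: "X \<omega> = vector [W (\<psi> 0) \<omega>, - W (\<psi> 1) \<omega>, W (\<psi> 2) \<omega>, - W (\<psi> 3) \<omega>]" for \<omega>
    unfolding X_def deriv_pair_def \<psi>_def by simp
  have mXi: "(\<lambda>\<omega>. X \<omega> $ i) \<in> borel_measurable M" for i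
  proof -
    have m: "W (\<psi> k) \<in> borel_measurable M" for k by (rule meas[OF t\<psi>])
    consider "i = 1" | "i = 2" | "i = 3" | "i = 4" using exhaust_4 by blast
    then show ?thesis
      by cases (use m in \<open>simp_all add: Xeq vec4_nth borel_measurable_uminus\<close>)
  qed
  have mX: "X \<in> borel_measurable M"
    by (subst borel_measurable_euclidean_space) (auto simp: Basis_vec_def inner_axis mXi)
  have mX': "X \<in> measurable M lborel" using mX by (simp add: measurable_cong_sets[OF refl sets_lborel])
  define \<mu> where "\<mu> = distr M lborel X"
  define Q where "Q t = qf 4 (gram phi) (cc t)" for t
  have tX: "t \<bullet> X \<omega> = (\<Sum>i<4. cc t i * W (\<psi> i) \<omega>)" for t \<omega>
    using inner_vec4[of t "\<lambda>k. W (\<psi> k) \<omega>"] unfolding Xeq by simp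
  have char\<mu>: "(\<integral>x. iexp (t \<bullet> x) \<partial>\<mu>) = exp (- Q t / 2)" for t
  proof -
    have cg: "centred_gaussian M (\<lambda>\<omega>. \<Sum>i<4. cc t i * W (\<psi> i) \<omega>) (Q t)"
      using gauss[of 4 \<psi> "cc t"] t\<psi> unfolding Q_def qf_def gram_def \<psi>_def by simp
    have "(\<integral>x. iexp (t \<bullet> x) \<partial>\<mu>) = (\<integral>\<omega>. iexp (t \<bullet> X \<omega>) \<partial>M)"
      unfolding \<mu>_def by (rule integral_distr[OF mX']) simp
    also have "\<dots> = (\<integral>\<omega>. iexp (\<Sum>i<4. cc t i * W (\<psi> i) \<omega>) \<partial>M)" by (simp only: tX)
    also have "\<dots> = exp (- Q t / 2)" by (rule char_centred_gaussian[OF ps cg])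
    finally show ?thesis .
  qed
  have pd: "0 < qf 4 (gram phi) c" if "\<exists>k<4. c k \<noteq> 0" for c
    by (rule gram_pd[OF assms(2) assms(3) that])
  obtain L :: "nat \<Rightarrow> nat \<Rightarrow> real" where L: "\<And>c. qf 4 (gram phi) c = (\<Sum>i<(4::nat). (\<Sum>k<4. L i k * c k)^2)"
    using cholesky[where g="gram phi" and n=4, OF gram_sym pd] by blast
  define A where "A = Amap L"
  have QA: "Q t = (norm (A t))^2" for t unfolding Q_def A_def L norm_Amap ..
  have linA: "linear A" unfolding A_def by (rule linear_Amap)
  define T where "T = adjoint A"
  have linT: "linear T" unfolding T_def by (rule adjoint_linear[OF linA])
  have adj: "t \<bullet> T z = A t \<bullet> z" for t z unfolding T_def by (rule adjoint_works[OF linA])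
  have mT: "T \<in> borel_measurable borel"
    by (rule borel_measurable_continuous_onI[OF linear_continuous_on])
       (use linT in \<open>simp add: linear_conv_bounded_linear\<close>)
  have mT': "T \<in> measurable gauss0 borel"
    using mT by (simp add: measurable_cong_sets[OF sets_gauss0 refl])
  define \<nu> where "\<nu> = distr gauss0 borel T"
  have char\<nu>: "(\<integral>x. iexp (t \<bullet> x) \<partial>\<nu>) = exp (- Q t / 2)" for t
  proof -
    have "(\<integral>x. iexp (t \<bullet> x) \<partial>\<nu>) = (\<integral>z. iexp (t \<bullet> T z) \<partial>gauss0)"
      unfolding \<nu>_def by (rule integral_distr[OF mT']) simp
    also have "\<dots> = (\<integral>z. iexp (A t \<bullet> z) \<partial>gauss0)" by (simp only: adj)
    also have "\<dots> = exp (- ((norm (A t))^2) / 2)" by (rule char_gauss0)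
    finally show ?thesis unfolding QA by simp
  qed
  have pg: "prob_space (gauss0 :: (real^4) measure)" by (rule prob_space_gauss0)
  have fin\<mu>: "finite_measure \<mu>" unfolding \<mu>_def
    using prob_space_distr[OF mX'] by (simp add: prob_space.finite_measure)
  have fin\<nu>: "finite_measure \<nu>" unfolding \<nu>_def
    using prob_space.prob_space_distr[OF pg mT'] by (simp add: prob_space.finite_measure)
  have s\<mu>: "sets \<mu> = sets borel" unfolding \<mu>_def by simp
  have s\<nu>: "sets \<nu> = sets borel" unfolding \<nu>_def by simp
  have eq: "\<mu> = \<nu>"
    by (rule measure_eq_char[OF fin\<mu> s\<mu> fin\<nu> s\<nu>]) (simp add: char\<mu> char\<nu>)
  have injA: "t = 0" if "A t = 0" for t
  proof (rule ccontr)
    assume "t \<noteq> 0"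
    then have "0 < Q t" unfolding Q_def using pd cc_nonzero by blast
    then show False using that QA by simp
  qed
  have injA': "inj A"
  proof (rule inj_onI)
    fix x y assume "A x = A y"
    then have "A (x - y) = 0" using linear_diff[OF linA, of x y] by simp
    then show "x = y" using injA[of "x - y"] by simp
  qed
  have surjA: "surj A" by (metis linear_injective_imp_surjective linA injA')
  have injT0: "z = 0" if "T z = 0" for z
  proof -
    obtain t where t: "A t = z" using surjA by (metis surjD)
    have "z \<bullet> z = t \<bullet> T z" using adj[of t z] t by simp
    then show ?thesis using that by simp
  qed
  have injT: "inj T"
  proof (rule inj_onI)
    fix x y assume "T x = T y"
    then have "T (x - y) = 0" using linear_diff[OF linT, of x y] by simp
    then show "x = y" using injT0[of "x - y"] by simp
  qed
  obtain T' where linT': "linear T'" and TT': "\<And>x. T' (T x) = x" and T'T: "\<And>x. T (T' x) = x"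
    using linear_injective_isomorphism[OF linT injT] by blast
  have null: "N \<in> null_sets \<nu>" if N: "N \<in> null_sets lborel" for N
  proof -
    have Nb: "N \<in> sets borel" using N by (simp add: null_sets_def)
    have pre: "T -` N = T' ` N"
    proof
      show "T -` N \<subseteq> T' ` N"
      proof
        fix x assume "x \<in> T -` N"
        then have "T x \<in> N" by simp
        moreover have "x = T' (T x)" using TT' by simp
        ultimately show "x \<in> T' ` N" by blast
      qed
      show "T' ` N \<subseteq> T -` N" using T'T by auto
    qed
    have negN: "negligible N"
      using N by (simp add: negligible_iff_null_sets null_sets_completionI)
    have neg: "negligible (T' ` N)"
      by (rule negligible_differentiable_image_negligible[OF order_refl negN])
         (rule linear_imp_differentiable_on[OF linT'])
    have preb: "T -` N \<in> sets borel"
      using measurable_sets[OF mT Nb] by simp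
    have pnull: "T -` N \<in> null_sets lborel"
    proof -
      have "T -` N \<in> null_sets lebesgue" using neg pre by (simp add: negligible_iff_null_sets)
      then show ?thesis using null_sets_completion_iff[of "T -` N" lborel] preb by simp
    qed
    have gm: "(\<lambda>z::real^4. ennreal (\<Prod>b\<in>Basis. std_normal_density (z \<bullet> b))) \<in> borel_measurable lborel"
      by measurable
    have ae: "AE x in lborel. x \<in> T -` N \<longrightarrow> ennreal (\<Prod>b\<in>Basis. std_normal_density (x \<bullet> b)) = 0"
      using AE_not_in[OF pnull] by eventually_elim simp
    have gnull: "T -` N \<in> null_sets gauss0"
      unfolding gauss0_def null_sets_density_iff[OF gm] using pnull ae by (simp add: null_sets_def)
    have "emeasure \<nu> N = emeasure gauss0 (T -` N \<inter> space gauss0)"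
      unfolding \<nu>_def by (rule emeasure_distr[OF mT' Nb])
    also have "\<dots> = 0" using gnull by (simp add: gauss0_def null_sets_def)
    finally show ?thesis using Nb s\<nu> by (simp add: null_sets_def)
  qed
  have "absolutely_continuous lborel \<mu>"
    unfolding absolutely_continuous_def eq using null by blast
  then show ?thesis unfolding \<mu>_def X_def .
qed

end
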